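(* For any $\xi>0$ and $\epsilon>0$, there exists an $\epsilon$-differentially private (central model) $\left(1+\xi,\ O_\xi\!\left(\frac{m^4}{\epsilon n}\right)\right)$-approximation algorithm for the rank aggregation problem, i.e., one whose additive error is at most $C_\xi \frac{m^4}{\epsilon n}$ for a constant $C_\xi$ depending only on $\xi$.
   Context: Items are $[m]=\{1,\dots,m\}$; $\mathbb{S}_m$ is the set of rankings (permutations) of $[m]$, $\pi(j)$ being the position of item $j$. The Kendall tau distance is $K(\pi_1,\pi_2)=|\{(i,j):\pi_1(i)<\pi_1(j),\ \pi_2(i)>\pi_2(j)\}|$. An input is a list $\Pi=\{\pi_1,\dots,\pi_n\}$ of $n$ rankings. Define $\bar K(\sigma,\Pi)=\frac1n\sum_k K(\sigma,\pi_k)$ and $\mathrm{OPT}(\Pi)=\min_\sigma\bar K(\sigma,\Pi)$. A randomized algorithm is an $(\alpha,\beta)$-approximation algorithm for rank aggregation if for every input $\Pi$ its output $\sigma$ satisfies $\mathbb{E}[\bar K(\sigma,\Pi)]\le\alpha\,\mathrm{OPT}(\Pi)+\beta$. Two inputs are neighboring if they differ in a single ranking; an algorithm $\mathcal{M}$ is $\epsilon$-DP (central model) if for all neighboring $\Pi,\Pi'$ and all output sets $S$, $\Pr[\mathcal{M}(\Pi)\in S]\le e^{\epsilon}\Pr[\mathcal{M}(\Pi')\in S]$. *)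

theory Defs
  imports "HOL-Probability.Probability" "HOL-Combinatorics.Permutations"
begin

type_synonym ranking = "nat \<Rightarrow> nat"

text \<open>Rankings of [m] = {1..m}: pi j is the position of item j.\<close>
definition rankings :: "nat \<Rightarrow> ranking set" where
  "rankings m = {\<pi>. \<pi> permutes {1..m}}"

definition kendall :: "nat \<Rightarrow> ranking \<Rightarrow> ranking \<Rightarrow> nat" where
  "kendall m \<pi>1 \<pi>2 = card {(i, j). i \<in> {1..m} \<and> j \<in> {1..m} \<and> \<pi>1 i < \<pi>1 j \<and> \<pi>2 i > \<pi>2 j}"

definition avg_kendall :: "nat \<Rightarrow> ranking \<Rightarrow> ranking list \<Rightarrow> real" where
  "avg_kendall m \<sigma> P = (\<Sum>k<length P. real (kendall m \<sigma> (P ! k))) / real (length P)"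

definition OPT :: "nat \<Rightarrow> ranking list \<Rightarrow> real" where
  "OPT m P = Min ((\<lambda>\<sigma>. avg_kendall m \<sigma> P) ` rankings m)"

definition valid_input :: "nat \<Rightarrow> ranking list \<Rightarrow> bool" where
  "valid_input m P \<longleftrightarrow> length P \<ge> 1 \<and> (\<forall>\<pi>\<in>set P. \<pi> \<in> rankings m)"

definition neighboring :: "ranking list \<Rightarrow> ranking list \<Rightarrow> bool" where
  "neighboring P P' \<longleftrightarrow> length P = length P' \<and>
     (\<exists>k<length P. \<forall>l<length P. l \<noteq> k \<longrightarrow> P ! l = P' ! l)"

definition differentially_private ::
  "real \<Rightarrow> (nat \<Rightarrow> ranking list \<Rightarrow> ranking pmf) \<Rightarrow> bool" where
  "differentially_private \<epsilon> M \<longleftrightarrow>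
     (\<forall>m P P' S. valid_input m P \<and> valid_input m P' \<and> neighboring P P' \<longrightarrow>
        measure_pmf.prob (M m P) S \<le> exp \<epsilon> * measure_pmf.prob (M m P') S)"

definition approx_algorithm ::
  "real \<Rightarrow> (nat \<Rightarrow> nat \<Rightarrow> real) \<Rightarrow> (nat \<Rightarrow> ranking list \<Rightarrow> ranking pmf) \<Rightarrow> bool" where
  "approx_algorithm \<alpha> \<beta> M \<longleftrightarrow>
     (\<forall>m P. valid_input m P \<longrightarrow>
        set_pmf (M m P) \<subseteq> rankings m \<and>
        measure_pmf.expectation (M m P) (\<lambda>\<sigma>. avg_kendall m \<sigma> P)
          \<le> \<alpha> * OPT m P + \<beta> m (length P))"

end

theory Submission
  imports Defs
begin

lemma xexp_mono:
  fixes a b :: real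
  assumes "1 \<le> a" "a \<le> b"
  shows "b * exp (-b) \<le> a * exp (-a)"
proof -
  have "1 + (b - a) \<le> exp (b - a)" using exp_ge_add_one_self[of "b-a"] by simp
  moreover have "b / a \<le> 1 + (b - a)"
  proof -
    have "b / a = 1 + (b - a) / a" using assms by (simp add: field_simps)
    also have "(b - a) / a \<le> b - a" using assms by (simp add: divide_le_eq mult_le_cancel_left1 mult_left_mono_neg)
    finally show ?thesis by simp
  qed
  ultimately have "b / a \<le> exp (b - a)" by linarith
  hence "b \<le> a * exp (b - a)" using assms by (simp add: divide_le_eq mult.commute)
  hence "b * exp (-b) \<le> a * exp (b - a) * exp (-b)" by (simp add: mult_right_mono)
  also have "a * exp (b - a) * exp (-b) = a * exp (-a)" by (simp add: mult.assoc flip: exp_add)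
  finally show ?thesis .
qed

lemma gibbs0:
  fixes g :: "'a \<Rightarrow> real"
  assumes fin: "finite R" and nn: "\<And>x. x \<in> R \<Longrightarrow> g x \<ge> 0" and x0: "x0 \<in> R" "g x0 = 0"
    and b: "\<beta> > 0" and L: "L \<ge> 1" and card: "real (card R) \<le> exp L"
  shows "(\<Sum>x\<in>R. g x * exp (-\<beta> * g x)) \<le> (2 * L / \<beta>) * (\<Sum>x\<in>R. exp (-\<beta> * g x))"
proof -
  define t where "t = L / \<beta>"
  define Z where "Z = (\<Sum>x\<in>R. exp (-\<beta> * g x))"
  have Z1: "Z \<ge> 1"
  proof -
    have "exp (-\<beta> * g x0) \<le> Z" unfolding Z_def
      by (rule member_le_sum) (use fin x0 in auto)
    thus ?thesis using x0 by simp
  qed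
  have t0: "t \<ge> 0" using b L by (simp add: t_def)
  have pt: "g x * exp (-\<beta> * g x) \<le> t * exp (-\<beta> * g x) + t * exp (-L)" if "x \<in> R" for x
  proof (cases "g x \<le> t")
    case True
    then show ?thesis using t0 by (simp add: mult_right_mono add_increasing2)
  next
    case False
    have "(\<beta> * g x) * exp (-(\<beta> * g x)) \<le> L * exp (-L)"
      apply (rule xexp_mono) using L False b by (auto simp: t_def field_simps)
    hence "g x * exp (-\<beta> * g x) \<le> t * exp (-L)" using b
      by (simp add: t_def field_simps)
    moreover have "0 \<le> t * exp (-\<beta> * g x)" using t0 by simp
    ultimately show ?thesis by linarith
  qed
  have "(\<Sum>x\<in>R. g x * exp (-\<beta> * g x)) \<le> (\<Sum>x\<in>R. t * exp (-\<beta> * g x) + t * exp (-L))"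
    by (rule sum_mono) (use pt in auto)
  also have "\<dots> = t * Z + real (card R) * (t * exp (-L))"
    by (simp add: sum.distrib Z_def sum_distrib_left)
  also have "real (card R) * (t * exp (-L)) \<le> exp L * (t * exp (-L))"
    using card t0 by (simp add: mult_right_mono)
  also have "exp L * (t * exp (-L)) = t" by (simp add: exp_minus field_simps)
  finally have "(\<Sum>x\<in>R. g x * exp (-\<beta> * g x)) \<le> t * Z + t" by simp
  moreover have "t \<le> t * Z" using Z1 t0 by (simp add: mult_le_cancel_left1)
  ultimately have "(\<Sum>x\<in>R. g x * exp (-\<beta> * g x)) \<le> 2 * t * Z" by linarith
  thus ?thesis by (simp add: Z_def t_def)
qed

lemma gibbs:
  fixes f :: "'a \<Rightarrow> real"
  assumes fin: "finite R" and ne: "R \<noteq> {}"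
    and b: "\<beta> > 0" and L: "L \<ge> 1" and card: "real (card R) \<le> exp L"
  shows "(\<Sum>x\<in>R. f x * exp (-\<beta> * f x)) / (\<Sum>x\<in>R. exp (-\<beta> * f x)) \<le> Min (f ` R) + 2 * L / \<beta>"
proof -
  define c where "c = Min (f ` R)"
  define g where "g x = f x - c" for x
  have cle: "c \<le> f x" if "x \<in> R" for x using fin that by (simp add: c_def)
  obtain x0 where x0: "x0 \<in> R" "f x0 = c"
  proof -
    have "c \<in> f ` R" unfolding c_def using fin ne by (intro Min_in) auto
    thus ?thesis using that by blast
  qed
  define Zg where "Zg = (\<Sum>x\<in>R. exp (-\<beta> * g x))"
  have Zg: "Zg > 0" unfolding Zg_def using fin ne by (simp add: sum_pos)
  have G: "(\<Sum>x\<in>R. g x * exp (-\<beta> * g x)) \<le> (2 * L / \<beta>) * Zg"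
    unfolding Zg_def
    by (rule gibbs0[OF fin _ x0(1) _ b L card]) (use cle x0 in \<open>auto simp: g_def\<close>)
  have e: "exp (-\<beta> * f x) = exp (-\<beta> * c) * exp (-\<beta> * g x)" for x
    by (simp add: g_def flip: exp_add) (simp add: algebra_simps)
  have den: "(\<Sum>x\<in>R. exp (-\<beta> * f x)) = exp (-\<beta> * c) * Zg"
    unfolding Zg_def sum_distrib_left by (rule sum.cong[OF refl], rule e)
  have num: "(\<Sum>x\<in>R. f x * exp (-\<beta> * f x)) = exp (-\<beta> * c) * (c * Zg + (\<Sum>x\<in>R. g x * exp (-\<beta> * g x)))"
  proof -
    have "(\<Sum>x\<in>R. f x * exp (-\<beta> * f x)) = (\<Sum>x\<in>R. exp (-\<beta> * c) * (c * exp (-\<beta> * g x) + g x * exp (-\<beta> * g x)))"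
      by (rule sum.cong[OF refl], subst e) (simp add: g_def algebra_simps)
    also have "\<dots> = exp (-\<beta> * c) * (\<Sum>x\<in>R. c * exp (-\<beta> * g x) + g x * exp (-\<beta> * g x))"
      by (rule sum_distrib_left[symmetric])
    also have "\<dots> = exp (-\<beta> * c) * (c * Zg + (\<Sum>x\<in>R. g x * exp (-\<beta> * g x)))"
      by (simp only: Zg_def sum.distrib sum_distrib_left)
    finally show ?thesis .
  qed
  have "(\<Sum>x\<in>R. f x * exp (-\<beta> * f x)) / (\<Sum>x\<in>R. exp (-\<beta> * f x))
      = c + (\<Sum>x\<in>R. g x * exp (-\<beta> * g x)) / Zg"
    unfolding num den using Zg by (simp add: field_simps)
  also have "\<dots> \<le> c + 2 * L / \<beta>" using G Zg by (simp add: divide_le_eq)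
  finally show ?thesis by (simp add: c_def)
qed

lemma fin_rankings: "finite (rankings m)"
  unfolding rankings_def by (rule finite_permutations) simp

lemma id_rankings: "id \<in> rankings m"
  unfolding rankings_def by simp

lemma card_rankings: "card (rankings m) = fact m"
  unfolding rankings_def by (rule card_permutations) auto

lemma card_rankings_le: "real (card (rankings m)) \<le> exp (real m ^ 2 + 1)"
proof -
  have "real (card (rankings m)) = fact m" by (simp add: card_rankings)
  also have "(fact m :: real) \<le> real (m ^ m)" by (rule fact_le_power)
  also have "real (m ^ m) = real m ^ m" by simp
  also have "\<dots> \<le> exp (real m) ^ m"
    by (rule power_mono) (use exp_ge_add_one_self[of "real m"] in linarith, simp)
  also have "\<dots> = exp (real m * real m)" by (simp add: exp_of_nat_mult)
  also have "\<dots> \<le> exp (real m ^ 2 + 1)" by (simp add: power2_eq_square)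
  finally show ?thesis .
qed

lemma kendall_le: "kendall m a b \<le> m ^ 2"
proof -
  have "kendall m a b \<le> card ({1..m} \<times> {1..m})"
    unfolding kendall_def by (rule card_mono) auto
  thus ?thesis by (simp add: power2_eq_square)
qed

definition gw :: "real \<Rightarrow> nat \<Rightarrow> ranking list \<Rightarrow> ranking \<Rightarrow> real" where
  "gw \<epsilon> m P \<sigma> = exp (- (\<epsilon> * real (length P) / (2 * (real m ^ 2 + 1))) * avg_kendall m \<sigma> P)"

definition gZ :: "real \<Rightarrow> nat \<Rightarrow> ranking list \<Rightarrow> real" where
  "gZ \<epsilon> m P = (\<Sum>\<sigma>\<in>rankings m. gw \<epsilon> m P \<sigma>)"

definition gf :: "real \<Rightarrow> nat \<Rightarrow> ranking list \<Rightarrow> ranking \<Rightarrow> real" where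
  "gf \<epsilon> m P \<sigma> = (if \<sigma> \<in> rankings m then gw \<epsilon> m P \<sigma> / gZ \<epsilon> m P else 0)"

definition mech :: "real \<Rightarrow> nat \<Rightarrow> ranking list \<Rightarrow> ranking pmf" where
  "mech \<epsilon> m P = embed_pmf (gf \<epsilon> m P)"

lemma gZ_pos: "gZ \<epsilon> m P > 0"
  unfolding gZ_def gw_def using fin_rankings id_rankings by (intro sum_pos) auto

lemma pmf_mech: "pmf (mech \<epsilon> m P) \<sigma> = gf \<epsilon> m P \<sigma>"
proof -
  have nn: "\<And>x. 0 \<le> gf \<epsilon> m P x" unfolding gf_def using gZ_pos[of \<epsilon> m P] by (simp add: gw_def)
  have "(\<integral>\<^sup>+x. ennreal (gf \<epsilon> m P x) \<partial>count_space UNIV)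
      = (\<integral>\<^sup>+x. ennreal (gw \<epsilon> m P x / gZ \<epsilon> m P) * indicator (rankings m) x \<partial>count_space UNIV)"
    by (rule nn_integral_cong) (auto simp: gf_def)
  also have "\<dots> = (\<integral>\<^sup>+x. ennreal (gw \<epsilon> m P x / gZ \<epsilon> m P) \<partial>count_space (rankings m))"
    by (simp add: nn_integral_count_space_indicator)
  also have "\<dots> = (\<Sum>x\<in>rankings m. ennreal (gw \<epsilon> m P x / gZ \<epsilon> m P))"
    by (simp add: nn_integral_count_space_finite fin_rankings)
  also have "\<dots> = ennreal (\<Sum>x\<in>rankings m. gw \<epsilon> m P x / gZ \<epsilon> m P)"
    using gZ_pos[of \<epsilon> m P] by (subst sum_ennreal) (auto simp: gw_def)
  also have "(\<Sum>x\<in>rankings m. gw \<epsilon> m P x / gZ \<epsilon> m P) = 1"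
    using gZ_pos[of \<epsilon> m P] by (simp add: gZ_def flip: sum_divide_distrib)
  finally have "(\<integral>\<^sup>+x. ennreal (gf \<epsilon> m P x) \<partial>count_space UNIV) = 1" by simp
  thus ?thesis unfolding mech_def using pmf_embed_pmf[of "gf \<epsilon> m P"] nn by blast
qed

lemma set_mech: "set_pmf (mech \<epsilon> m P) \<subseteq> rankings m"
  by (auto simp: set_pmf_iff pmf_mech gf_def split: if_splits)

lemma sum_diff_single:
  fixes a b :: "nat \<Rightarrow> real"
  assumes "k < n" "\<And>l. l < n \<Longrightarrow> l \<noteq> k \<Longrightarrow> a l = b l"
  shows "(\<Sum>l<n. a l) - (\<Sum>l<n. b l) = a k - b k"
proof -
  have "(\<Sum>l<n. a l) = a k + (\<Sum>l\<in>{..<n} - {k}. a l)" using assms by (simp add: sum.remove)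
  moreover have "(\<Sum>l<n. b l) = b k + (\<Sum>l\<in>{..<n} - {k}. b l)" using assms by (simp add: sum.remove)
  moreover have "(\<Sum>l\<in>{..<n} - {k}. a l) = (\<Sum>l\<in>{..<n} - {k}. b l)"
    using assms by (intro sum.cong) auto
  ultimately show ?thesis by simp
qed

lemma gw_alt:
  assumes "length P \<ge> 1"
  shows "gw \<epsilon> m P \<sigma> = exp (- (\<epsilon> / (2 * (real m ^ 2 + 1))) * (\<Sum>k<length P. real (kendall m \<sigma> (P ! k))))"
  using assms unfolding gw_def avg_kendall_def by (simp add: field_simps)

lemma gw_ratio:
  assumes nb: "neighboring P P'" and n: "length P \<ge> 1" and e: "\<epsilon> > 0"
  shows "gw \<epsilon> m P \<sigma> \<le> exp (\<epsilon> / 2) * gw \<epsilon> m P' \<sigma>"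
proof -
  define c where "c = \<epsilon> / (2 * (real m ^ 2 + 1))"
  have c0: "c \<ge> 0" using e by (simp add: c_def)
  from nb obtain k where k: "k < length P" "length P = length P'"
    and eq: "\<And>l. l < length P \<Longrightarrow> l \<noteq> k \<Longrightarrow> P ! l = P' ! l"
    unfolding neighboring_def by blast
  have d: "(\<Sum>l<length P. real (kendall m \<sigma> (P' ! l))) - (\<Sum>l<length P. real (kendall m \<sigma> (P ! l)))
        = real (kendall m \<sigma> (P' ! k)) - real (kendall m \<sigma> (P ! k))"
    by (rule sum_diff_single) (use k eq in auto)
  have "real (kendall m \<sigma> (P' ! k)) \<le> real (m ^ 2)" using kendall_le[of m \<sigma> "P' ! k"]
    by (simp only: of_nat_le_iff)
  hence "real (kendall m \<sigma> (P' ! k)) \<le> real m ^ 2" by simp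
  hence d2: "(\<Sum>l<length P. real (kendall m \<sigma> (P' ! l))) - (\<Sum>l<length P. real (kendall m \<sigma> (P ! l))) \<le> real m ^ 2"
    unfolding d using of_nat_0_le_iff[of "kendall m \<sigma> (P ! k)"] by linarith
  have "c * real m ^ 2 \<le> \<epsilon> / 2"
  proof -
    have "c * real m ^ 2 = (\<epsilon> / 2) * (real m ^ 2 / (real m ^ 2 + 1))" by (simp add: c_def)
    also have "\<dots> \<le> (\<epsilon> / 2) * 1" using e by (intro mult_left_mono) (auto simp: divide_le_eq_1 add_pos_nonneg intro: add_nonneg_pos)
    finally show ?thesis by simp
  qed
  hence "c * ((\<Sum>l<length P. real (kendall m \<sigma> (P' ! l))) - (\<Sum>l<length P. real (kendall m \<sigma> (P ! l)))) \<le> \<epsilon> / 2"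
    using mult_left_mono[OF d2 c0] by linarith
  hence "- c * (\<Sum>l<length P. real (kendall m \<sigma> (P ! l))) \<le> \<epsilon> / 2 + - c * (\<Sum>l<length P'. real (kendall m \<sigma> (P' ! l)))"
    using k by (simp add: algebra_simps)
  hence "exp (- c * (\<Sum>l<length P. real (kendall m \<sigma> (P ! l)))) \<le> exp (\<epsilon> / 2 + - c * (\<Sum>l<length P'. real (kendall m \<sigma> (P' ! l))))"
    by simp
  moreover have "gw \<epsilon> m P \<sigma> = exp (- c * (\<Sum>l<length P. real (kendall m \<sigma> (P ! l))))"
    unfolding gw_alt[OF n] c_def ..
  moreover have "gw \<epsilon> m P' \<sigma> = exp (- c * (\<Sum>l<length P'. real (kendall m \<sigma> (P' ! l))))"
    using n k unfolding c_def by (intro gw_alt) simp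
  ultimately show ?thesis by (simp only: exp_add)
qed

lemma gZ_ratio:
  assumes nb: "neighboring P P'" and n: "length P \<ge> 1" and e: "\<epsilon> > 0"
  shows "gZ \<epsilon> m P \<le> exp (\<epsilon> / 2) * gZ \<epsilon> m P'"
  unfolding gZ_def sum_distrib_left by (rule sum_mono, rule gw_ratio[OF assms])

lemma neighboring_sym: "neighboring P P' \<Longrightarrow> neighboring P' P"
  unfolding neighboring_def by metis

lemma gf_ratio:
  assumes nb: "neighboring P P'" and n: "length P \<ge> 1" and e: "\<epsilon> > 0"
  shows "gf \<epsilon> m P \<sigma> \<le> exp \<epsilon> * gf \<epsilon> m P' \<sigma>"
proof (cases "\<sigma> \<in> rankings m")
  case True
  have n': "length P' \<ge> 1" using nb n unfolding neighboring_def by simp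
  have Z: "gZ \<epsilon> m P > 0" "gZ \<epsilon> m P' > 0" by (rule gZ_pos)+
  have w: "gw \<epsilon> m P \<sigma> \<le> exp (\<epsilon> / 2) * gw \<epsilon> m P' \<sigma>" by (rule gw_ratio[OF assms])
  have z: "gZ \<epsilon> m P' \<le> exp (\<epsilon> / 2) * gZ \<epsilon> m P" by (rule gZ_ratio[OF neighboring_sym[OF nb] n' e])
  have w0: "gw \<epsilon> m P' \<sigma> \<ge> 0" by (simp add: gw_def)
  have "gw \<epsilon> m P \<sigma> / gZ \<epsilon> m P \<le> exp (\<epsilon> / 2) * gw \<epsilon> m P' \<sigma> / gZ \<epsilon> m P"
    using w Z by (simp add: divide_right_mono)
  also have "\<dots> \<le> exp (\<epsilon> / 2) * gw \<epsilon> m P' \<sigma> / (gZ \<epsilon> m P' / exp (\<epsilon> / 2))"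
    using z Z w0 by (intro divide_left_mono) (auto simp: field_simps)
  also have "\<dots> = exp \<epsilon> * (gw \<epsilon> m P' \<sigma> / gZ \<epsilon> m P')"
    by (simp add: field_simps flip: exp_add)
  finally show ?thesis using True by (simp add: gf_def)
qed (simp add: gf_def)

lemma mech_dp:
  assumes e: "\<epsilon> > 0"
  shows "differentially_private \<epsilon> (mech \<epsilon>)"
  unfolding differentially_private_def
proof (intro allI impI)
  fix m P P' S assume a: "valid_input m P \<and> valid_input m P' \<and> neighboring P P'"
  have fin: "finite (S \<inter> rankings m)" using fin_rankings by simp
  have pr: "measure_pmf.prob (mech \<epsilon> m Q) S = (\<Sum>\<sigma>\<in>S \<inter> rankings m. gf \<epsilon> m Q \<sigma>)" for Q
  proof -
    have "measure_pmf.prob (mech \<epsilon> m Q) S = measure_pmf.prob (mech \<epsilon> m Q) (S \<inter> rankings m)"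
    proof -
      have "S \<inter> set_pmf (mech \<epsilon> m Q) = (S \<inter> rankings m) \<inter> set_pmf (mech \<epsilon> m Q)"
        using set_mech[of \<epsilon> m Q] by blast
      thus ?thesis using measure_Int_set_pmf[of "mech \<epsilon> m Q" S]
        measure_Int_set_pmf[of "mech \<epsilon> m Q" "S \<inter> rankings m"] by simp
    qed
    also have "\<dots> = (\<Sum>\<sigma>\<in>S \<inter> rankings m. gf \<epsilon> m Q \<sigma>)"
      by (simp add: measure_measure_pmf_finite[OF fin] pmf_mech)
    finally show ?thesis .
  qed
  have n: "length P \<ge> 1" using a unfolding valid_input_def by simp
  show "measure_pmf.prob (mech \<epsilon> m P) S \<le> exp \<epsilon> * measure_pmf.prob (mech \<epsilon> m P') S"
    unfolding pr sum_distrib_left by (rule sum_mono, rule gf_ratio) (use a n e in auto)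
qed

lemma OPT_nonneg: "OPT m P \<ge> 0"
proof -
  have "OPT m P \<in> (\<lambda>\<sigma>. avg_kendall m \<sigma> P) ` rankings m"
    unfolding OPT_def using fin_rankings id_rankings by (intro Min_in) auto
  thus ?thesis by (auto simp: avg_kendall_def intro!: divide_nonneg_nonneg sum_nonneg)
qed

lemma mech_exp:
  assumes e: "\<epsilon> > 0" and v: "valid_input m P"
  shows "measure_pmf.expectation (mech \<epsilon> m P) (\<lambda>\<sigma>. avg_kendall m \<sigma> P)
     \<le> OPT m P + 4 * (real m ^ 2 + 1) ^ 2 / (\<epsilon> * real (length P))"
proof -
  define \<beta> where "\<beta> = \<epsilon> * real (length P) / (2 * (real m ^ 2 + 1))"
  define f where "f \<sigma> = avg_kendall m \<sigma> P" for \<sigma>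
  have n: "length P \<ge> 1" using v by (simp add: valid_input_def)
  have b: "\<beta> > 0" unfolding \<beta>_def using e n by (intro divide_pos_pos mult_pos_pos) (auto intro: add_nonneg_pos)
  have gw: "gw \<epsilon> m P \<sigma> = exp (-\<beta> * f \<sigma>)" for \<sigma> by (simp add: gw_def \<beta>_def f_def)
  have "measure_pmf.expectation (mech \<epsilon> m P) f = (\<Sum>\<sigma>\<in>rankings m. f \<sigma> * pmf (mech \<epsilon> m P) \<sigma>)"
    by (rule integral_measure_pmf_real) (use fin_rankings set_mech[of \<epsilon> m P] in blast)+
  also have "\<dots> = (\<Sum>\<sigma>\<in>rankings m. f \<sigma> * exp (-\<beta> * f \<sigma>)) / (\<Sum>\<sigma>\<in>rankings m. exp (-\<beta> * f \<sigma>))"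
    by (simp add: pmf_mech gf_def gZ_def gw sum_divide_distrib)
  also have "\<dots> \<le> Min (f ` rankings m) + 2 * (real m ^ 2 + 1) / \<beta>"
    by (rule gibbs[OF fin_rankings _ b _ card_rankings_le]) (use id_rankings in auto)
  also have "2 * (real m ^ 2 + 1) / \<beta> = 4 * (real m ^ 2 + 1) ^ 2 / (\<epsilon> * real (length P))"
    unfolding \<beta>_def using e n by (simp add: field_simps power2_eq_square)
  finally show ?thesis by (simp add: f_def OPT_def)
qed

lemma mech_approx:
  assumes e: "\<epsilon> > 0" and xi: "\<xi> > 0"
  shows "approx_algorithm (1 + \<xi>) (\<lambda>m n. 16 * real m ^ 4 / (\<epsilon> * real n)) (mech \<epsilon>)"
  unfolding approx_algorithm_def
proof (intro allI impI conjI)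
  fix m P assume v: "valid_input m P"
  show "set_pmf (mech \<epsilon> m P) \<subseteq> rankings m" by (rule set_mech)
  have n: "length P \<ge> 1" using v by (simp add: valid_input_def)
  have O: "OPT m P \<le> (1 + \<xi>) * OPT m P" using OPT_nonneg[of m P] xi by (simp add: algebra_simps)
  show "measure_pmf.expectation (mech \<epsilon> m P) (\<lambda>\<sigma>. avg_kendall m \<sigma> P)
          \<le> (1 + \<xi>) * OPT m P + 16 * real m ^ 4 / (\<epsilon> * real (length P))"
  proof (cases "m = 0")
    case True
    have k0: "(\<lambda>\<sigma>. avg_kendall m \<sigma> P) = (\<lambda>_. 0)" using True by (simp add: avg_kendall_def kendall_def)
    have "0 \<le> 16 * real m ^ 4 / (\<epsilon> * real (length P))" using e by simp
    thus ?thesis unfolding k0 using O OPT_nonneg[of m P] by simp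
  next
    case False
    have "(real m ^ 2 + 1) ^ 2 \<le> (2 * real m ^ 2) ^ 2"
    proof (rule power_mono)
      have "1 \<le> real m" using False by simp
      hence "1 \<le> real m ^ 2" by simp
      thus "real m ^ 2 + 1 \<le> 2 * real m ^ 2" by simp
    qed simp
    hence "4 * (real m ^ 2 + 1) ^ 2 \<le> 16 * real m ^ 4" by (simp add: power_mult_distrib)
    hence "4 * (real m ^ 2 + 1) ^ 2 / (\<epsilon> * real (length P)) \<le> 16 * real m ^ 4 / (\<epsilon> * real (length P))"
      using e n by (intro divide_right_mono) auto
    thus ?thesis using mech_exp[OF e v] O by linarith
  qed
qed

theorem corollary1:
  shows "\<forall>\<xi>::real. \<xi> > 0 \<longrightarrow> (\<exists>C::real. \<forall>\<epsilon>::real. \<epsilon> > 0 \<longrightarrow>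
     (\<exists>M. differentially_private \<epsilon> M \<and>
          approx_algorithm (1 + \<xi>) (\<lambda>m n. C * real m ^ 4 / (\<epsilon> * real n)) M))"
  using mech_dp mech_approx by blast

end
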